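(* Let $\mathcal{A}$ and $\mathcal{B}$ be alternative $W^{*}$-factors with identities $1_{\mathcal{A}},1_{\mathcal{B}}$, with $\mathcal{A}$ containing a projection $p\notin\{0,1_{\mathcal{A}}\}$, and let $\Phi:\mathcal{A}\to\mathcal{B}$ be a bijection satisfying $\Phi(ab-ba^{*})=\Phi(a)\Phi(b)-\Phi(b)\Phi(a)^{*}$ for all $a,b\in\mathcal{A}$. Then $\Phi(\mathbb{R}1_{\mathcal{A}})=\mathbb{R}1_{\mathcal{B}}$; for every $a\in\mathcal{A}$, $a=a^{*}$ if and only if $\Phi(a)=\Phi(a)^{*}$; and $\Phi(\mathbb{C}1_{\mathcal{A}})=\mathbb{C}1_{\mathcal{B}}$.
   Context: An alternative $W^{*}$-factor is a prime alternative $C^{*}$-algebra (complete normed alternative complex $\ast$-algebra with $\|a^{*}a\|=\|a\|^{2}$, where alternative means $a^{2}b=a(ab)$, $ba^{2}=(ba)a$) that is a dual Banach space; it is unital with center $\mathbb{C}1$. A projection is a nonzero self-adjoint idempotent. *)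

theory Defs
  imports "HOL-Analysis.Analysis"
begin

text \<open>Complex vector spaces are not a type class in the distribution, so a complex
normed space is rendered as a real normed space together with an explicit complex
scalar multiplication extending the real one and making the norm complex-homogeneous.\<close>

definition complex_scaling :: "(complex \<Rightarrow> 'a::real_normed_vector \<Rightarrow> 'a) \<Rightarrow> bool" where
  "complex_scaling sc \<longleftrightarrow>
     (\<forall>r a. sc (complex_of_real r) a = r *\<^sub>R a) \<and>
     (\<forall>c d a. sc (c * d) a = sc c (sc d a)) \<and>
     (\<forall>c a b. sc c (a + b) = sc c a + sc c b) \<and>
     (\<forall>c d a. sc (c + d) a = sc c a + sc d a) \<and>
     (\<forall>c a. norm (sc c a) = cmod c * norm a)"

definition alt_cstar_algebra ::
  "(complex \<Rightarrow> 'a::banach \<Rightarrow> 'a) \<Rightarrow> ('a \<Rightarrow> 'a \<Rightarrow> 'a) \<Rightarrow> ('a \<Rightarrow> 'a) \<Rightarrow> bool" where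
  "alt_cstar_algebra sc mul st \<longleftrightarrow>
     complex_scaling sc \<and>
     (\<forall>a b c. mul (a + b) c = mul a c + mul b c) \<and>
     (\<forall>a b c. mul a (b + c) = mul a b + mul a c) \<and>
     (\<forall>z a b. mul (sc z a) b = sc z (mul a b)) \<and>
     (\<forall>z a b. mul a (sc z b) = sc z (mul a b)) \<and>
     (\<forall>a b. norm (mul a b) \<le> norm a * norm b) \<and>
     (\<forall>a. st (st a) = a) \<and>
     (\<forall>a b. st (a + b) = st a + st b) \<and>
     (\<forall>z a. st (sc z a) = sc (cnj z) (st a)) \<and>
     (\<forall>a b. st (mul a b) = mul (st b) (st a)) \<and>
     (\<forall>a. norm (mul (st a) a) = (norm a)\<^sup>2) \<and>
     (\<forall>a b. mul (mul a a) b = mul a (mul a b)) \<and>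
     (\<forall>a b. mul b (mul a a) = mul (mul b a) a)"

definition alg_ideal ::
  "(complex \<Rightarrow> 'a::banach \<Rightarrow> 'a) \<Rightarrow> ('a \<Rightarrow> 'a \<Rightarrow> 'a) \<Rightarrow> 'a set \<Rightarrow> bool" where
  "alg_ideal sc mul I \<longleftrightarrow>
     0 \<in> I \<and> (\<forall>x\<in>I. \<forall>y\<in>I. x + y \<in> I) \<and> (\<forall>c. \<forall>x\<in>I. sc c x \<in> I) \<and>
     (\<forall>x\<in>I. \<forall>a. mul a x \<in> I \<and> mul x a \<in> I)"

definition alg_prime ::
  "(complex \<Rightarrow> 'a::banach \<Rightarrow> 'a) \<Rightarrow> ('a \<Rightarrow> 'a \<Rightarrow> 'a) \<Rightarrow> bool" where
  "alg_prime sc mul \<longleftrightarrow>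
     (\<forall>I J. alg_ideal sc mul I \<and> alg_ideal sc mul J \<and> (\<forall>x\<in>I. \<forall>y\<in>J. mul x y = 0)
        \<longrightarrow> I = {0} \<or> J = {0})"

definition cdual :: "(complex \<Rightarrow> 'x::real_normed_vector \<Rightarrow> 'x) \<Rightarrow> ('x \<Rightarrow> complex) set" where
  "cdual sx = {f. bounded_linear f \<and> (\<forall>c x. f (sx c x) = c * f x)}"

definition is_dual_of ::
  "(complex \<Rightarrow> 'a::banach \<Rightarrow> 'a) \<Rightarrow> (complex \<Rightarrow> 'x::real_normed_vector \<Rightarrow> 'x) \<Rightarrow> bool" where
  "is_dual_of sc sx \<longleftrightarrow>
     complex_scaling sx \<and>
     (\<exists>T. bij_betw T UNIV (cdual sx) \<and>
          (\<forall>a b. T (a + b) = (\<lambda>x. T a x + T b x)) \<and>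
          (\<forall>c a. T (sc c a) = (\<lambda>x. c * T a x)) \<and>
          (\<forall>a. onorm (T a) = norm a))"

text \<open>Alternative W*-factor: prime alternative C*-algebra which is a dual Banach space
(predual of type 'x). The identity e is supplied as data (it is unique).\<close>

definition alt_W_factor ::
  "(complex \<Rightarrow> 'a::banach \<Rightarrow> 'a) \<Rightarrow> ('a \<Rightarrow> 'a \<Rightarrow> 'a) \<Rightarrow> ('a \<Rightarrow> 'a) \<Rightarrow>
   (complex \<Rightarrow> 'x::real_normed_vector \<Rightarrow> 'x) \<Rightarrow> bool" where
  "alt_W_factor sc mul st sx \<longleftrightarrow>
     alt_cstar_algebra sc mul st \<and> alg_prime sc mul \<and> is_dual_of sc sx"

definition is_identity :: "('a \<Rightarrow> 'a \<Rightarrow> 'a) \<Rightarrow> 'a \<Rightarrow> bool" where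
  "is_identity mul e \<longleftrightarrow> (\<forall>a. mul e a = a \<and> mul a e = a)"

definition is_projection :: "('a::zero \<Rightarrow> 'a \<Rightarrow> 'a) \<Rightarrow> ('a \<Rightarrow> 'a) \<Rightarrow> 'a \<Rightarrow> bool" where
  "is_projection mul st p \<longleftrightarrow> p \<noteq> 0 \<and> st p = p \<and> mul p p = p"

end

theory Submission
  imports Defs "HOL-Computational_Algebra.Formal_Power_Series"
begin

definition cc :: "nat \<Rightarrow> real" where
  "cc n = pochhammer (-1/2) n / fact n"

lemma cc_gchoose: "cc n = (-1)^n * ((1/2::real) gchoose n)"
  by (simp add: cc_def gbinomial_pochhammer)

lemma cc_0 [simp]: "cc 0 = 1" by (simp add: cc_def)

lemma cc_Suc_nonpos: "cc (Suc n) \<le> 0"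
proof -
  have "pochhammer (-1/2::real) (Suc n) = (-1/2) * pochhammer (1/2) n"
    by (simp add: pochhammer_rec)
  moreover have "pochhammer (1/2::real) n \<ge> 0" by (rule pochhammer_nonneg) simp
  ultimately show ?thesis unfolding cc_def
    by (simp add: divide_nonpos_pos mult_nonpos_nonneg)
qed

lemma cc_conv: "(\<Sum>i\<le>k. cc i * cc (k - i)) = (if k = 0 then 1 else if k = 1 then -1 else 0)"
proof -
  have "(\<Sum>i\<le>k. cc i * cc (k - i)) = (\<Sum>i\<le>k. (-1)^k * (((1/2::real) gchoose i) * ((1/2) gchoose (k - i))))"
  proof (rule sum.cong)
    fix i assume "i \<in> {..k}"
    hence "(-1::real)^i * (-1)^(k-i) = (-1)^k" by (simp add: power_add[symmetric])
    thus "cc i * cc (k - i) = (-1)^k * (((1/2::real) gchoose i) * ((1/2) gchoose (k - i)))"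
      unfolding cc_gchoose by (metis (no_types, lifting) mult.assoc mult.left_commute)
  qed simp
  also have "\<dots> = (-1)^k * (\<Sum>i=0..k. ((1/2::real) gchoose i) * ((1/2) gchoose (k - i)))"
    by (simp add: sum_distrib_left atLeast0AtMost)
  also have "\<dots> = (-1)^k * ((1::real) gchoose k)"
    by (subst gbinomial_Vandermonde) simp
  also have "((1::real) gchoose k) = of_nat (1 choose k)"
    using binomial_gbinomial[of 1 k, where 'a=real] by simp
  finally show ?thesis
    by (cases k; cases "k = 1"; auto simp: binomial_eq_0)
qed

lemma cc_partial: "(\<Sum>i\<le>m. cc i) = pochhammer (1/2) m / fact m"
proof -
  have "(\<Sum>i\<le>m. cc i) = (\<Sum>i\<le>m. ((1/2::real) gchoose i) * (-1)^i)"
    by (simp add: cc_gchoose mult.commute)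
  also have "\<dots> = (-1)^m * ((1/2 - 1::real) gchoose m)" by (rule gbinomial_sum_lower_neg)
  also have "\<dots> = pochhammer (1/2) m / fact m"
    by (simp add: gbinomial_pochhammer)
  finally show ?thesis .
qed

lemma cc_abs_partial: "(\<Sum>i\<le>m. \<bar>cc i\<bar>) \<le> 2"
proof -
  have "(\<Sum>i\<le>m. \<bar>cc i\<bar>) = (\<Sum>i\<le>m. (if i = 0 then 2 else 0) - cc i)"
  proof (rule sum.cong)
    fix i show "\<bar>cc i\<bar> = (if i = 0 then 2 else 0) - cc i"
      using cc_Suc_nonpos[of "i - 1"] by (cases i) auto
  qed simp
  also have "\<dots> = 2 - (\<Sum>i\<le>m. cc i)"
    by (simp add: sum_subtractf)
  also have "(\<Sum>i\<le>m. cc i) \<ge> 0" unfolding cc_partial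
    by (intro divide_nonneg_pos pochhammer_nonneg) auto
  ultimately show ?thesis by linarith
qed

lemma cc_abs_summable: "summable (\<lambda>n. \<bar>cc n\<bar>)"
proof (rule summableI_nonneg_bounded[where x=2])
  fix n show "(\<Sum>i<n. \<bar>cc i\<bar>) \<le> 2"
    using cc_abs_partial[of "n - 1"] by (cases n) (auto simp: lessThan_Suc_atMost)
qed simp

lemma cc_abs_suminf: "(\<Sum>n. \<bar>cc n\<bar>) \<le> 2"
  using cc_abs_summable cc_abs_partial
  by (intro LIMSEQ_le_const2[OF summable_LIMSEQ']) auto

lemma cc_abs_tail: "(\<Sum>n. \<bar>cc (Suc n)\<bar>) \<le> 1"
proof -
  have "(\<Sum>n. \<bar>cc (Suc n)\<bar>) = (\<Sum>n. \<bar>cc n\<bar>) - \<bar>cc 0\<bar>"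
    using suminf_split_head[OF cc_abs_summable] by simp
  thus ?thesis using cc_abs_suminf by simp
qed

lemma sum_square_split:
  fixes f :: "nat \<Rightarrow> nat \<Rightarrow> 'b::ab_group_add"
  shows "(\<Sum>i\<le>N. \<Sum>j\<le>N. f i j) = (\<Sum>k\<le>N. \<Sum>i\<le>k. f i (k - i)) +
          (\<Sum>(i,j)\<in>{(i,j). i \<le> N \<and> j \<le> N \<and> N < i + j}. f i j)"
proof -
  have "(\<Sum>i\<le>N. \<Sum>j\<le>N. f i j) = (\<Sum>(i,j)\<in>{..N}\<times>{..N}. f i j)"
    by (simp add: sum.cartesian_product)
  also have "{..N}\<times>{..N} = {(i,j). i + j \<le> N} \<union> {(i,j). i \<le> N \<and> j \<le> N \<and> N < i + j}"
    by auto
  also have "(\<Sum>(i,j)\<in>\<dots>. f i j) = (\<Sum>(i,j)\<in>{(i,j). i + j \<le> N}. f i j) +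
       (\<Sum>(i,j)\<in>{(i,j). i \<le> N \<and> j \<le> N \<and> N < i + j}. f i j)"
  proof (rule sum.union_disjoint)
    show "finite {(i, j). i + j \<le> N}"
      by (rule finite_subset[of _ "{..N}\<times>{..N}"]) auto
    show "finite {(i, j). i \<le> N \<and> j \<le> N \<and> N < i + j}"
      by (rule finite_subset[of _ "{..N}\<times>{..N}"]) auto
  qed auto
  also have "(\<Sum>(i,j)\<in>{(i,j). i + j \<le> N}. f i j) = (\<Sum>k\<le>N. \<Sum>i\<le>k. f i (k - i))"
    by (rule sum.triangle_reindex_eq)
  finally show ?thesis .
qed

definition rho :: "nat \<Rightarrow> real" where
  "rho N = (\<Sum>(i,j)\<in>{(i,j). i \<le> N \<and> j \<le> N \<and> N < i + j}. \<bar>cc i\<bar> * \<bar>cc j\<bar>)"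

lemma rho_tendsto: "rho \<longlonglongrightarrow> 0"
proof -
  let ?a = "\<lambda>n. \<bar>cc n\<bar>"
  define A where "A = (\<Sum>n. ?a n)"
  have eq: "rho N = (\<Sum>i\<le>N. ?a i) * (\<Sum>j\<le>N. ?a j) - (\<Sum>k\<le>N. \<Sum>i\<le>k. ?a i * ?a (k - i))" for N
    using sum_square_split[of "\<lambda>i j. ?a i * ?a j" N]
    by (simp add: rho_def sum_product)
  have 1: "(\<lambda>N. (\<Sum>i\<le>N. ?a i) * (\<Sum>j\<le>N. ?a j)) \<longlonglongrightarrow> A * A"
    unfolding A_def by (intro tendsto_mult summable_LIMSEQ' cc_abs_summable)
  have s: "(\<lambda>k. \<Sum>i\<le>k. ?a i * ?a (k - i)) sums (A * A)"
    unfolding A_def by (rule Cauchy_product_sums) (use cc_abs_summable in simp_all)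
  have 2: "(\<lambda>N. \<Sum>k\<le>N. \<Sum>i\<le>k. ?a i * ?a (k - i)) \<longlonglongrightarrow> A * A"
    using summable_LIMSEQ'[OF sums_summable[OF s]] sums_unique[OF s] by simp
  show ?thesis unfolding eq using tendsto_diff[OF 1 2] by simp
qed

locale acs =
  fixes sc :: "complex \<Rightarrow> 'a::banach \<Rightarrow> 'a" and mul :: "'a \<Rightarrow> 'a \<Rightarrow> 'a"
    and st :: "'a \<Rightarrow> 'a" and e :: 'a
  assumes alt: "alt_cstar_algebra sc mul st" and prime: "alg_prime sc mul"
    and ide: "is_identity mul e"
begin

lemma sc_real: "sc (complex_of_real r) a = r *\<^sub>R a"
  using alt by (simp add: alt_cstar_algebra_def complex_scaling_def)
lemma sc_mult: "sc (c * d) a = sc c (sc d a)"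
  using alt by (simp add: alt_cstar_algebra_def complex_scaling_def)
lemma sc_add: "sc c (a + b) = sc c a + sc c b"
  using alt by (simp add: alt_cstar_algebra_def complex_scaling_def)
lemma sc_addl: "sc (c + d) a = sc c a + sc d a"
  using alt by (simp add: alt_cstar_algebra_def complex_scaling_def)
lemma mul_addl: "mul (a + b) c = mul a c + mul b c"
  using alt by (simp add: alt_cstar_algebra_def)
lemma mul_addr: "mul a (b + c) = mul a b + mul a c"
  using alt by (simp add: alt_cstar_algebra_def)
lemma mul_scl: "mul (sc z a) b = sc z (mul a b)"
  using alt by (simp add: alt_cstar_algebra_def)
lemma mul_scr: "mul a (sc z b) = sc z (mul a b)"
  using alt by (simp add: alt_cstar_algebra_def)
lemma mul_norm: "norm (mul a b) \<le> norm a * norm b"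
  using alt by (simp add: alt_cstar_algebra_def)
lemma st_st [simp]: "st (st a) = a"
  using alt by (simp add: alt_cstar_algebra_def)
lemma st_add: "st (a + b) = st a + st b"
  using alt by (simp add: alt_cstar_algebra_def)
lemma st_sc: "st (sc z a) = sc (cnj z) (st a)"
  using alt by (simp add: alt_cstar_algebra_def)
lemma st_mul: "st (mul a b) = mul (st b) (st a)"
  using alt by (simp add: alt_cstar_algebra_def)
lemma cstar: "norm (mul (st a) a) = (norm a)\<^sup>2"
  using alt by (simp add: alt_cstar_algebra_def)
lemma altl: "mul (mul a a) b = mul a (mul a b)"
  using alt by (simp add: alt_cstar_algebra_def)
lemma altr: "mul b (mul a a) = mul (mul b a) a"
  using alt by (simp add: alt_cstar_algebra_def)
lemma e_left [simp]: "mul e a = a" and e_right [simp]: "mul a e = a"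
  using ide by (auto simp: is_identity_def)

lemma sc_zero [simp]: "sc c 0 = 0"
  using sc_add[of c 0 0] by simp
lemma sc_zero_left [simp]: "sc 0 a = 0"
  using sc_real[of 0 a] by simp
lemma sc_one [simp]: "sc 1 a = a"
  using sc_real[of 1 a] by simp
lemma sc_minus_left: "sc (- c) a = - sc c a"
  using sc_addl[of c "-c" a] by (simp add: add_eq_0_iff)
lemma sc_minus: "sc c (- a) = - sc c a"
  using sc_add[of c a "-a"] by (simp add: add_eq_0_iff)
lemma sc_diff: "sc c (a - b) = sc c a - sc c b"
  using sc_add[of c a "-b"] sc_minus by simp

lemma mul_0l [simp]: "mul 0 a = 0"
  using mul_addl[of 0 0 a] by simp
lemma mul_0r [simp]: "mul a 0 = 0"
  using mul_addr[of a 0 0] by simp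
lemma mul_minusl: "mul (- a) b = - mul a b"
  using mul_addl[of a "-a" b] by (simp add: add_eq_0_iff)
lemma mul_minusr: "mul a (- b) = - mul a b"
  using mul_addr[of a b "-b"] by (simp add: add_eq_0_iff)
lemma mul_diffl: "mul (a - b) c = mul a c - mul b c"
  using mul_addl[of a "-b" c] mul_minusl by simp
lemma mul_diffr: "mul a (b - c) = mul a b - mul a c"
  using mul_addr[of a b "-c"] mul_minusr by simp
lemma mul_scaleRl: "mul (r *\<^sub>R a) b = r *\<^sub>R mul a b"
  using mul_scl[of "complex_of_real r" a b] by (simp add: sc_real)
lemma mul_scaleRr: "mul a (r *\<^sub>R b) = r *\<^sub>R mul a b"
  using mul_scr[of a "complex_of_real r" b] by (simp add: sc_real)

lemmas mul_simps = mul_addl mul_addr mul_diffl mul_diffr mul_minusl mul_minusr mul_scl mul_scr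
  mul_scaleRl mul_scaleRr

lemma st_0 [simp]: "st 0 = 0"
  using st_add[of 0 0] by simp
lemma st_minus: "st (- a) = - st a"
  using st_add[of a "-a"] by (simp add: add_eq_0_iff)
lemma st_diff: "st (a - b) = st a - st b"
  using st_add[of a "-b"] st_minus by simp
lemma st_scaleR: "st (r *\<^sub>R a) = r *\<^sub>R st a"
  using st_sc[of "complex_of_real r" a] by (simp add: sc_real[symmetric])

lemma st_e [simp]: "st e = e"
proof -
  have "e = st (mul (st e) e)" using st_st[of e] by simp
  also have "\<dots> = mul (st e) e" by (simp only: st_mul st_st)
  also have "\<dots> = st e" by simp
  finally show ?thesis by simp
qed

lemma norm_st [simp]: "norm (st a) = norm a"
proof -
  have le: "norm b \<le> norm (st b)" for b
  proof (cases "b = 0")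
    case False
    have "(norm b)\<^sup>2 \<le> norm (st b) * norm b" using cstar[of b] mul_norm[of "st b" b] by simp
    thus ?thesis using False by (simp add: power2_eq_square)
  qed simp
  show ?thesis using le[of a] le[of "st a"] by simp
qed

lemma norm_e: "norm e \<le> 1"
proof -
  have "norm e = (norm e)\<^sup>2" using cstar[of e] by simp
  hence h: "norm e * norm e = norm e" by (simp add: power2_eq_square)
  show ?thesis
  proof (rule ccontr)
    assume "\<not> norm e \<le> 1"
    hence "norm e * 1 < norm e * norm e" by (intro mult_strict_left_mono) auto
    thus False using h by simp
  qed
qed

lemma bb: "bounded_bilinear mul"
proof
  show "mul (a + a') b = mul a b + mul a' b" for a a' b by (rule mul_addl)
  show "mul a (b + b') = mul a b + mul a b'" for a b b' by (rule mul_addr)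
  show "mul (r *\<^sub>R a) b = r *\<^sub>R mul a b" for r a b by (rule mul_scaleRl)
  show "mul a (r *\<^sub>R b) = r *\<^sub>R mul a b" for r a b by (rule mul_scaleRr)
  show "\<exists>K. \<forall>a b. norm (mul a b) \<le> norm a * norm b * K"
    by (rule exI[of _ 1]) (simp add: mul_norm)
qed

lemma bl_st: "bounded_linear st"
proof
  show "st (a + b) = st a + st b" for a b by (rule st_add)
  show "st (r *\<^sub>R a) = r *\<^sub>R st a" for r a by (rule st_scaleR)
  show "\<exists>K. \<forall>a. norm (st a) \<le> norm a * K" by (rule exI[of _ 1]) simp
qed

lemma bl_sc: "bounded_linear (sc c)"
proof
  show "sc c (a + b) = sc c a + sc c b" for a b by (rule sc_add)
  show "sc c (r *\<^sub>R a) = r *\<^sub>R sc c a" for r a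
    by (metis mult.commute sc_mult sc_real)
  show "\<exists>K. \<forall>a. norm (sc c a) \<le> norm a * K"
    using alt by (intro exI[of _ "cmod c"]) (simp add: alt_cstar_algebra_def complex_scaling_def mult.commute)
qed

definition assoc where "assoc x y z = mul (mul x y) z - mul x (mul y z)"

lemma assoc_swap12: "assoc x y z = - assoc y x z"
proof -
  have "mul (mul (x + y) (x + y)) z = mul (x + y) (mul (x + y) z)" by (rule altl)
  hence "mul (mul x x) z + mul (mul x y) z + mul (mul y x) z + mul (mul y y) z =
         mul x (mul x z) + mul x (mul y z) + mul y (mul x z) + mul y (mul y z)"
    by (simp add: mul_simps algebra_simps)
  thus ?thesis unfolding assoc_def using altl[of x z] altl[of y z] by (simp add: algebra_simps)
qed

lemma assoc_swap23: "assoc x y z = - assoc x z y"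
proof -
  have "mul x (mul (y + z) (y + z)) = mul (mul x (y + z)) (y + z)" by (rule altr)
  hence "mul x (mul y y) + mul x (mul y z) + mul x (mul z y) + mul x (mul z z) =
         mul (mul x y) y + mul (mul x y) z + mul (mul x z) y + mul (mul x z) z"
    by (simp add: mul_simps algebra_simps)
  thus ?thesis unfolding assoc_def using altr[of x y] altr[of x z] by (simp add: algebra_simps)
qed

definition central where "central a \<longleftrightarrow> (\<forall>b. mul a b = mul b a)"

lemma central_assoc3: assumes "central z" shows "assoc x y z = 0"
proof -
  have "mul (mul x y) z - mul z (mul x y) - (mul x (mul y z) - mul x (mul z y)) - (mul (mul x z) y - mul (mul z x) y)
        = assoc x y z - assoc x z y + assoc z x y"
    unfolding assoc_def by (simp add: algebra_simps)
  moreover have "mul (mul x y) z - mul z (mul x y) - (mul x (mul y z) - mul x (mul z y)) - (mul (mul x z) y - mul (mul z x) y) = 0"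
  proof -
    have c: "mul z b = mul b z" for b using assms unfolding central_def by blast
    show ?thesis by (simp only: c[of "mul x y"] c[of y] c[of x]) simp
  qed
  moreover have "assoc x z y = - assoc x y z" using assoc_swap23[of x z y] by simp
  moreover have "assoc z x y = assoc x y z" using assoc_swap12[of z x y] assoc_swap23[of x z y] by simp
  ultimately have "assoc x y z + assoc x y z + assoc x y z = 0" by simp
  moreover have "(3::real) *\<^sub>R w = w + w + w" for w :: 'a
    using scaleR_add_left[of 2 1 w] scaleR_add_left[of 1 1 w] by simp
  ultimately have "(3::real) *\<^sub>R assoc x y z = 0" by simp
  thus ?thesis by simp
qed

lemma central_assoc:
  assumes "central z"
  shows "mul (mul x y) z = mul x (mul y z)" "mul (mul x z) y = mul x (mul z y)"
    "mul (mul z x) y = mul z (mul x y)"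
proof -
  have 3: "assoc x y z = 0" by (rule central_assoc3[OF assms])
  have 2: "assoc x z y = 0" using 3 assoc_swap23[of x z y] by simp
  have 1: "assoc z x y = 0" using 2 assoc_swap12[of z x y] by simp
  show "mul (mul x y) z = mul x (mul y z)" "mul (mul x z) y = mul x (mul z y)"
    "mul (mul z x) y = mul z (mul x y)" using 1 2 3 unfolding assoc_def by simp_all
qed

lemma central_mul: assumes "central u" "central v" shows "central (mul u v)"
  unfolding central_def
proof
  fix b
  have "mul (mul u v) b = mul u (mul v b)" using central_assoc(3)[OF assms(1)] by simp
  also have "\<dots> = mul u (mul b v)" using assms(2) by (simp add: central_def)
  also have "\<dots> = mul (mul u b) v" using central_assoc(1)[OF assms(2)] by simp
  also have "\<dots> = mul (mul b u) v" using assms(1) by (simp add: central_def)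
  also have "\<dots> = mul b (mul u v)" using central_assoc(1)[OF assms(2)] by simp
  finally show "mul (mul u v) b = mul b (mul u v)" .
qed

lemma central_e: "central e" by (simp add: central_def)
lemma central_add: "central a \<Longrightarrow> central b \<Longrightarrow> central (a + b)"
  by (simp add: central_def mul_simps)
lemma central_diff: "central a \<Longrightarrow> central b \<Longrightarrow> central (a - b)"
  by (simp add: central_def mul_simps)
lemma central_scaleR: "central a \<Longrightarrow> central (r *\<^sub>R a)"
  by (simp add: central_def mul_simps)
lemma central_sc: "central a \<Longrightarrow> central (sc c a)"
  by (simp add: central_def mul_simps)
lemma central_0: "central 0" by (simp add: central_def)

lemma central_domain:
  assumes u: "central u" and v: "central v" and uv: "mul u v = 0"
  shows "u = 0 \<or> v = 0"
proof -
  have idl: "alg_ideal sc mul (range (mul w))" if w: "central w" for w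
    unfolding alg_ideal_def
  proof (intro conjI ballI allI)
    show "0 \<in> range (mul w)" by (rule range_eqI[of _ _ 0]) simp
    fix x y assume "x \<in> range (mul w)" "y \<in> range (mul w)"
    then obtain a b where "x = mul w a" "y = mul w b" by auto
    thus "x + y \<in> range (mul w)" by (metis mul_addr rangeI)
  next
    fix c x assume "x \<in> range (mul w)"
    then obtain a where "x = mul w a" by auto
    thus "sc c x \<in> range (mul w)" by (metis mul_scr rangeI)
  next
    fix x a assume "x \<in> range (mul w)"
    then obtain b where x: "x = mul w b" by auto
    have "mul a x = mul w (mul a b)"
      using central_assoc[OF w] w unfolding x central_def by metis
    thus "mul a x \<in> range (mul w)" by simp
    have "mul x a = mul w (mul b a)"
      using central_assoc[OF w] unfolding x by metis
    thus "mul x a \<in> range (mul w)" by simp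
  qed
  have "\<forall>x\<in>range (mul u). \<forall>y\<in>range (mul v). mul x y = 0"
  proof (intro ballI)
    fix x y assume "x \<in> range (mul u)" "y \<in> range (mul v)"
    then obtain a b where x: "x = mul u a" and y: "y = mul v b" by auto
    have "mul x y = mul u (mul a (mul v b))" using central_assoc(3)[OF u] x y by simp
    also have "mul a (mul v b) = mul v (mul a b)"
      using central_assoc[OF v] v unfolding central_def by metis
    also have "mul u (mul v (mul a b)) = mul (mul u v) (mul a b)"
      using central_assoc(3)[OF u] by simp
    finally show "mul x y = 0" using uv by simp
  qed
  hence "range (mul u) = {0} \<or> range (mul v) = {0}"
    using prime idl[OF u] idl[OF v] unfolding alg_prime_def by blast
  thus ?thesis by (metis e_right rangeI singletonD)
qed

end

context acs begin

primrec pw :: "nat \<Rightarrow> 'a \<Rightarrow> 'a" where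
  "pw 0 y = e" | "pw (Suc n) y = mul y (pw n y)"

lemma pw_central: "central y \<Longrightarrow> central (pw n y)"
  by (induction n) (auto intro: central_mul central_e)

lemma pw_add: "central y \<Longrightarrow> pw (m + n) y = mul (pw m y) (pw n y)"
  by (induction m) (simp_all add: central_assoc(3))

lemma pw_1 [simp]: "pw 1 y = y" by simp

lemma pw_norm: "norm (pw n y) \<le> norm y ^ n"
proof (induction n)
  case 0 thus ?case using norm_e by simp
next
  case (Suc n)
  have "norm (pw (Suc n) y) \<le> norm y * norm (pw n y)" using mul_norm by simp
  also have "\<dots> \<le> norm y * norm y ^ n" using Suc by (intro mult_left_mono) auto
  finally show ?case by simp
qed

lemma pw_norm1: "norm y \<le> 1 \<Longrightarrow> norm (pw n y) \<le> 1"
  using pw_norm[of n y] power_le_one[of "norm y" n] by simp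

lemma pw_sa: "st y = y \<Longrightarrow> central y \<Longrightarrow> st (pw n y) = pw n y"
proof (induction n)
  case (Suc n)
  have "st (pw (Suc n) y) = mul (pw n y) y" using Suc by (simp add: st_mul)
  also have "\<dots> = pw (Suc n) y" using Suc(3) by (simp add: central_def)
  finally show ?case .
qed simp

definition S :: "'a \<Rightarrow> 'a" where "S y = (\<Sum>n. cc n *\<^sub>R pw n y)"

lemma S_abs: "norm y \<le> 1 \<Longrightarrow> summable (\<lambda>n. norm (cc n *\<^sub>R pw n y))"
proof (rule summable_comparison_test[OF _ cc_abs_summable])
  assume y: "norm y \<le> 1"
  show "\<exists>N. \<forall>n\<ge>N. norm (norm (cc n *\<^sub>R pw n y)) \<le> \<bar>cc n\<bar>"
    using pw_norm1[OF y] by (auto intro!: mult_left_le)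
qed

lemma S_summable: "norm y \<le> 1 \<Longrightarrow> summable (\<lambda>n. cc n *\<^sub>R pw n y)"
  by (rule summable_norm_cancel[OF S_abs])

lemma S_central:
  assumes y: "central y" "norm y \<le> 1" shows "central (S y)"
  unfolding central_def
proof
  fix b
  have "mul (S y) b = (\<Sum>n. mul (cc n *\<^sub>R pw n y) b)"
    unfolding S_def by (rule bounded_linear.suminf[OF bounded_bilinear.bounded_linear_left[OF bb] S_summable[OF y(2)]])
  also have "\<dots> = (\<Sum>n. mul b (cc n *\<^sub>R pw n y))"
    using pw_central[OF y(1)] by (simp add: central_def mul_scaleRl mul_scaleRr)
  also have "\<dots> = mul b (S y)"
    unfolding S_def by (rule bounded_linear.suminf[OF bounded_bilinear.bounded_linear_right[OF bb] S_summable[OF y(2)], symmetric])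
  finally show "mul (S y) b = mul b (S y)" .
qed

lemma S_sa:
  assumes y: "central y" "norm y \<le> 1" "st y = y" shows "st (S y) = S y"
proof -
  have "st (S y) = (\<Sum>n. st (cc n *\<^sub>R pw n y))"
    unfolding S_def by (rule bounded_linear.suminf[OF bl_st S_summable[OF y(2)]])
  also have "\<dots> = S y" unfolding S_def using pw_sa[OF y(3) y(1)] by (simp add: st_scaleR)
  finally show ?thesis .
qed

lemma S_e_dist:
  assumes y: "norm y \<le> 1" shows "norm (e - S y) \<le> 1"
proof -
  let ?f = "\<lambda>n. cc n *\<^sub>R pw n y"
  have "(\<Sum>n. ?f (Suc n)) = S y - e" unfolding S_def using suminf_split_head[OF S_summable[OF y]] by simp
  hence "norm (e - S y) = norm (\<Sum>n. ?f (Suc n))" by (simp add: norm_minus_commute)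
  also have "\<dots> \<le> (\<Sum>n. norm (?f (Suc n)))"
    by (rule summable_norm) (use summable_Suc_iff[THEN iffD2, OF S_abs[OF y]] in simp)
  also have "\<dots> \<le> (\<Sum>n. \<bar>cc (Suc n)\<bar>)"
  proof (rule suminf_le)
    show "summable (\<lambda>n. norm (?f (Suc n)))"
      using summable_Suc_iff[THEN iffD2, OF S_abs[OF y]] by simp
    show "summable (\<lambda>n. \<bar>cc (Suc n)\<bar>)"
      using summable_Suc_iff[THEN iffD2, OF cc_abs_summable] by simp
    show "norm (?f (Suc n)) \<le> \<bar>cc (Suc n)\<bar>" for n
      using pw_norm1[OF y, of "Suc n"] by (auto intro!: mult_left_le)
  qed
  also have "\<dots> \<le> 1" by (rule cc_abs_tail)
  finally show ?thesis .
qed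

lemma S_sq:
  assumes y: "central y" "norm y \<le> 1" shows "mul (S y) (S y) = e - y"
proof -
  define P where "P N = (\<Sum>n\<le>N. cc n *\<^sub>R pw n y)" for N
  have PS: "P \<longlonglongrightarrow> S y" unfolding P_def S_def by (rule summable_LIMSEQ'[OF S_summable[OF y(2)]])
  have lim1: "(\<lambda>N. mul (P N) (P N)) \<longlonglongrightarrow> mul (S y) (S y)"
    by (rule bounded_bilinear.tendsto[OF bb PS PS])
  have PP: "mul (P N) (P N) = (\<Sum>i\<le>N. \<Sum>j\<le>N. (cc i * cc j) *\<^sub>R pw (i + j) y)" for N
  proof -
    have "mul (P N) (P N) = (\<Sum>j\<le>N. \<Sum>i\<le>N. mul (cc i *\<^sub>R pw i y) (cc j *\<^sub>R pw j y))"
      unfolding P_def by (simp only: bounded_bilinear.sum_left[OF bb] bounded_bilinear.sum_right[OF bb])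
    also have "\<dots> = (\<Sum>i\<le>N. \<Sum>j\<le>N. mul (cc i *\<^sub>R pw i y) (cc j *\<^sub>R pw j y))"
      by (rule sum.swap)
    also have "\<dots> = (\<Sum>i\<le>N. \<Sum>j\<le>N. (cc i * cc j) *\<^sub>R pw (i + j) y)"
      by (intro sum.cong refl) (simp add: mul_scaleRl mul_scaleRr pw_add[OF y(1)])
    finally show ?thesis .
  qed
  have tri: "(\<Sum>k\<le>N. \<Sum>i\<le>k. (cc i * cc (k - i)) *\<^sub>R pw (i + (k - i)) y) = e - y" if "N \<ge> 1" for N
  proof -
    have "(\<Sum>k\<le>N. \<Sum>i\<le>k. (cc i * cc (k - i)) *\<^sub>R pw (i + (k - i)) y)
        = (\<Sum>k\<le>N. (\<Sum>i\<le>k. cc i * cc (k - i)) *\<^sub>R pw k y)"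
    proof (rule sum.cong[OF refl])
      fix k
      have "(\<Sum>i\<le>k. (cc i * cc (k - i)) *\<^sub>R pw (i + (k - i)) y) = (\<Sum>i\<le>k. (cc i * cc (k - i)) *\<^sub>R pw k y)"
        by (rule sum.cong[OF refl]) simp
      thus "(\<Sum>i\<le>k. (cc i * cc (k - i)) *\<^sub>R pw (i + (k - i)) y) = (\<Sum>i\<le>k. cc i * cc (k - i)) *\<^sub>R pw k y"
        by (simp add: scaleR_sum_left)
    qed
    also have "\<dots> = (\<Sum>k\<le>N. (if k = 0 then 1 else if k = 1 then -1 else 0) *\<^sub>R pw k y)"
      by (simp add: cc_conv)
    also have "\<dots> = (\<Sum>k\<in>{0,1}. (if k = 0 then 1 else if k = 1 then -1 else 0) *\<^sub>R pw k y)"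
      by (rule sum.mono_neutral_right) (use that in auto)
    also have "\<dots> = e - y" by simp
    finally show ?thesis .
  qed
  have bound: "norm (mul (P N) (P N) - (e - y)) \<le> rho N" if "N \<ge> 1" for N
  proof -
    have eq: "mul (P N) (P N) - (e - y) =
       (\<Sum>(i,j)\<in>{(i,j). i \<le> N \<and> j \<le> N \<and> N < i + j}. (cc i * cc j) *\<^sub>R pw (i + j) y)"
    proof -
      have "mul (P N) (P N) = (\<Sum>k\<le>N. \<Sum>i\<le>k. (cc i * cc (k - i)) *\<^sub>R pw (i + (k - i)) y) +
          (\<Sum>(i,j)\<in>{(i,j). i \<le> N \<and> j \<le> N \<and> N < i + j}. (cc i * cc j) *\<^sub>R pw (i + j) y)"
        unfolding PP by (rule sum_square_split)
      thus ?thesis unfolding tri[OF that] by (simp only: add_diff_cancel_left')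
    qed
    have "norm (mul (P N) (P N) - (e - y)) \<le> (\<Sum>(i,j)\<in>{(i,j). i \<le> N \<and> j \<le> N \<and> N < i + j}. norm ((cc i * cc j) *\<^sub>R pw (i + j) y))"
      unfolding eq by (rule norm_sum[THEN order_trans]) (simp add: case_prod_unfold)
    also have "\<dots> \<le> rho N" unfolding rho_def
    proof (rule sum_mono)
      fix p assume "p \<in> {(i,j). i \<le> N \<and> j \<le> N \<and> N < i + j}"
      obtain i j where p: "p = (i, j)" by (rule prod.exhaust)
      have "norm ((cc i * cc j) *\<^sub>R pw (i + j) y) \<le> \<bar>cc i\<bar> * \<bar>cc j\<bar>"
        using pw_norm1[OF y(2), of "i + j"] by (auto simp: abs_mult intro!: mult_left_le)
      thus "(case p of (i, j) \<Rightarrow> norm ((cc i * cc j) *\<^sub>R pw (i + j) y)) \<le> (case p of (i, j) \<Rightarrow> \<bar>cc i\<bar> * \<bar>cc j\<bar>)"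
        using p by simp
    qed
    finally show ?thesis .
  qed
  have z: "(\<lambda>N. mul (P N) (P N) - (e - y)) \<longlonglongrightarrow> 0"
  proof (rule Lim_null_comparison[OF _ rho_tendsto])
    show "\<forall>\<^sub>F N in sequentially. norm (mul (P N) (P N) - (e - y)) \<le> rho N"
      by (rule eventually_sequentiallyI[of 1]) (rule bound)
  qed
  have "(\<lambda>N. mul (P N) (P N)) \<longlonglongrightarrow> e - y"
    by (rule LIM_zero_cancel[OF z])
  thus ?thesis using LIMSEQ_unique[OF lim1] by simp
qed

end

context acs begin

lemma sc_ii: "sc \<i> (sc \<i> w) = - w"
  by (simp add: sc_mult[symmetric] sc_minus_left)

lemma half_half: "(1/2::real) *\<^sub>R w + (1/2) *\<^sub>R w = (w::'a)"
  using scaleR_left_distrib[of "1/2::real" "1/2" w] by simp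

lemma sq_le:
  assumes a: "central a" "st a = a" and b: "central b" "st b = b"
  shows "(norm a)\<^sup>2 \<le> norm (mul a a + mul b b)"
proof -
  define u where "u = a - sc \<i> b"
  have stu: "st u = a + sc \<i> b"
    unfolding u_def using a b by (simp add: st_diff st_sc sc_minus_left)
  have ba: "mul b a = mul a b" using b by (simp add: central_def)
  have "mul (st u) u = mul (a + sc \<i> b) (a - sc \<i> b)" by (simp only: stu) (simp add: u_def)
  also have "\<dots> = mul a a + mul b b" by (simp add: mul_simps ba sc_ii sc_add sc_diff)
  finally have "mul (st u) u = mul a a + mul b b" .
  hence "norm (mul a a + mul b b) = (norm u)\<^sup>2" using cstar[of u] by simp
  moreover have "norm a \<le> norm u"
  proof -
    have "a = (1/2) *\<^sub>R (u + st u)" by (simp only: stu) (simp add: u_def algebra_simps half_half)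
    hence "norm a \<le> (1/2) * (norm u + norm (st u))"
      by (metis norm_scaleR norm_triangle_ineq abs_of_nonneg mult_left_mono
          zero_le_divide_1_iff zero_le_numeral)
    thus ?thesis by simp
  qed
  ultimately show ?thesis by (simp add: power_mono)
qed

lemma central_sa_sq: "central x \<Longrightarrow> st x = x \<Longrightarrow> central (mul x x) \<and> st (mul x x) = mul x x"
  by (simp add: central_mul st_mul)

lemma pos_neg_zero:
  assumes x: "central x" "st x = x" and p: "norm (e - x) \<le> 1" and n: "norm (e + x) \<le> 1"
  shows "x = 0"
proof -
  have c1: "central (e - x)" "st (e - x) = e - x" using x by (simp_all add: central_diff central_e st_diff)
  have c2: "central (e + x)" "st (e + x) = e + x" using x by (simp_all add: central_add central_e st_add)
  define q where "q = S (e - x)"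
  define r where "r = S (e + x)"
  have q: "central q" "st q = q" "mul q q = x"
    unfolding q_def using S_central[OF c1(1) p] S_sa[OF c1(1) p c1(2)] S_sq[OF c1(1) p] by simp_all
  have r: "central r" "st r = r" "mul r r = - x"
    unfolding r_def using S_central[OF c2(1) n] S_sa[OF c2(1) n c2(2)] S_sq[OF c2(1) n] by simp_all
  have "(norm q)\<^sup>2 \<le> norm (mul q q + mul r r)" by (rule sq_le[OF q(1,2) r(1,2)])
  hence "q = 0" using q(3) r(3) by simp
  thus ?thesis using q(3) by simp
qed

lemma e_sq_bound:
  assumes x: "central x" "st x = x" "norm x \<le> 1"
  shows "norm (e - mul x x) \<le> 1"
proof -
  have xx: "central (mul x x)" "st (mul x x) = mul x x" using central_sa_sq[OF x(1,2)] by auto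
  have nxx: "norm (mul x x) \<le> 1"
    by (rule order_trans[OF mul_norm]) (rule mult_le_one; simp add: x(3))
  define s where "s = S (mul x x)"
  have s: "central s" "st s = s" "mul s s = e - mul x x"
    unfolding s_def using S_central[OF xx(1) nxx] S_sa[OF xx(1) nxx xx(2)] S_sq[OF xx(1) nxx] by simp_all
  have "norm (e - mul x x) = (norm s)\<^sup>2" using cstar[of s] s by simp
  also have "\<dots> \<le> norm (mul s s + mul x x)" by (rule sq_le[OF s(1,2) x(1,2)])
  also have "\<dots> \<le> 1" using s(3) norm_e by simp
  finally show ?thesis .
qed

lemma dichotomy:
  assumes x: "central x" "st x = x" "norm x \<le> 1"
  shows "norm (e - x) \<le> 1 \<or> norm (e + x) \<le> 1"
proof -
  define y where "y = e - mul x x"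
  have y: "central y" "norm y \<le> 1"
    unfolding y_def using e_sq_bound[OF x] central_sa_sq[OF x(1,2)] by (auto intro: central_diff central_e)
  define W where "W = S y"
  have W: "central W" "mul W W = mul x x" "norm (e - W) \<le> 1"
    unfolding W_def using S_central[OF y] S_sq[OF y] S_e_dist[OF y(2)] by (simp_all add: y_def)
  have xW: "mul x W = mul W x" using W(1) by (simp add: central_def)
  have "mul (W - x) (W + x) = 0"
    by (simp add: mul_simps W(2) xW)
  hence "W - x = 0 \<or> W + x = 0"
    by (intro central_domain) (use W(1) x(1) in \<open>auto intro: central_diff central_add\<close>)
  hence "W = x \<or> W = - x" by (auto simp: eq_neg_iff_add_eq_0)
  thus ?thesis using W(3) by auto
qed

lemma norm_e_cases: "e = 0 \<or> norm e = 1"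
proof -
  have "norm e = (norm e)\<^sup>2" using cstar[of e] by simp
  hence "norm e * (norm e - 1) = 0" by (simp add: power2_eq_square algebra_simps)
  thus ?thesis by auto
qed

lemma core:
  assumes h: "central h" "st h = h"
  shows "\<exists>r. h = r *\<^sub>R e"
proof (cases "e = 0")
  case True
  have "h = mul e h" by simp
  thus ?thesis using True by (intro exI[of _ 0]) simp
next
  case False
  hence ne: "norm e = 1" using norm_e_cases by auto
  define k where "k = 1 / (4 * (norm h + 1))"
  have d: "4 * (norm h + 1) > 0" by (smt (verit) norm_ge_zero)
  hence kpos: "k > 0" unfolding k_def by simp
  define g where "g = k *\<^sub>R h"
  have g: "central g" "st g = g" unfolding g_def using h by (simp_all add: central_scaleR st_scaleR)
  have ng: "norm g \<le> 1/4"
  proof -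
    have "norm g = norm h / (4 * (norm h + 1))" unfolding g_def k_def by simp
    also have "\<dots> \<le> 1/4" using d by (simp add: divide_le_eq)
    finally show ?thesis .
  qed
  define x where "x l = g - l *\<^sub>R e" for l :: real
  have xc: "central (x l)" "st (x l) = x l" for l
    unfolding x_def using g by (simp_all add: central_diff central_scaleR central_e st_diff st_scaleR)
  have nx: "norm (x l) \<le> 1" if "l \<in> {-1/2..1/2}" for l
  proof -
    have "norm (x l) \<le> norm g + norm (l *\<^sub>R e)" unfolding x_def by (rule norm_triangle_ineq4)
    also have "\<dots> \<le> 1/4 + 1/2" using ng that ne by (intro add_mono) auto
    finally show ?thesis by simp
  qed
  define A where "A = {l. norm (e - x l) \<le> 1}"
  define B where "B = {l. norm (e + x l) \<le> 1}"
  have cA: "closed A" unfolding A_def x_def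
    by (intro closed_Collect_le continuous_intros)
  have cB: "closed B" unfolding B_def x_def
    by (intro closed_Collect_le continuous_intros)
  have cov: "{-1/2..1/2::real} \<subseteq> A \<union> B"
    using dichotomy[OF xc nx] unfolding A_def B_def by blast
  have a: "-1/2 \<in> A \<inter> {-1/2..1/2}"
  proof -
    have "e - x (-1/2) = (1/2) *\<^sub>R e - g" unfolding x_def
      using half_half[of e] by (simp add: algebra_simps)
    hence "norm (e - x (-1/2)) \<le> 1/2 + 1/4"
      using norm_triangle_ineq4[of "(1/2) *\<^sub>R e" g] ng ne by simp
    thus ?thesis unfolding A_def by simp
  qed
  have b: "1/2 \<in> B \<inter> {-1/2..1/2}"
  proof -
    have "e + x (1/2) = (1/2) *\<^sub>R e + g" unfolding x_def
      using half_half[of e] by (simp add: algebra_simps)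
    hence "norm (e + x (1/2)) \<le> 1/2 + 1/4"
      using norm_triangle_ineq[of "(1/2) *\<^sub>R e" g] ng ne by simp
    thus ?thesis unfolding B_def by simp
  qed
  have "A \<inter> B \<inter> {-1/2..1/2} \<noteq> {}"
    using connected_Icc[of "-1/2::real" "1/2"] cA cB cov a b unfolding connected_closed by blast
  then obtain l where "l \<in> A" "l \<in> B" by blast
  hence "x l = 0" using pos_neg_zero[OF xc] unfolding A_def B_def by blast
  hence "g = l *\<^sub>R e" unfolding x_def by simp
  have "h = (1/k) *\<^sub>R (k *\<^sub>R h)" using kpos by simp
  also have "\<dots> = (l / k) *\<^sub>R e" using \<open>g = l *\<^sub>R e\<close> unfolding g_def by simp
  finally show ?thesis by blast
qed

end

context acs begin

lemma central_st: "central a \<Longrightarrow> central (st a)"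
  unfolding central_def
proof
  fix b assume c: "\<forall>b. mul a b = mul b a"
  have "mul (st a) b = st (mul (st b) a)" by (simp add: st_mul)
  also have "\<dots> = st (mul a (st b))" using c by simp
  also have "\<dots> = mul b (st a)" by (simp add: st_mul)
  finally show "mul (st a) b = mul b (st a)" .
qed

lemma decomp: "b = (1/2) *\<^sub>R (b + st b) + sc \<i> (sc (- \<i>) ((1/2) *\<^sub>R (b - st b)))"
  "st ((1/2) *\<^sub>R (b + st b)) = (1/2) *\<^sub>R (b + st b)"
  "st (sc (- \<i>) ((1/2) *\<^sub>R (b - st b))) = sc (- \<i>) ((1/2) *\<^sub>R (b - st b))"
proof -
  have "sc \<i> (sc (- \<i>) w) = w" for w by (simp add: sc_mult[symmetric])
  thus "b = (1/2) *\<^sub>R (b + st b) + sc \<i> (sc (- \<i>) ((1/2) *\<^sub>R (b - st b)))"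
    by (simp add: algebra_simps half_half)
  show "st ((1/2) *\<^sub>R (b + st b)) = (1/2) *\<^sub>R (b + st b)"
    by (simp add: st_scaleR st_add)
  show "st (sc (- \<i>) ((1/2) *\<^sub>R (b - st b))) = sc (- \<i>) ((1/2) *\<^sub>R (b - st b))"
    by (simp add: st_sc st_scaleR st_diff sc_minus_left sc_diff sc_minus algebra_simps)
qed

lemma central_iff_sa: "central a \<longleftrightarrow> (\<forall>b. st b = b \<longrightarrow> mul b a = mul a b)"
proof
  assume "central a" thus "\<forall>b. st b = b \<longrightarrow> mul b a = mul a b" by (simp add: central_def)
next
  assume H: "\<forall>b. st b = b \<longrightarrow> mul b a = mul a b"
  show "central a" unfolding central_def
  proof
    fix b
    let ?h = "(1/2) *\<^sub>R (b + st b)" and ?k = "sc (- \<i>) ((1/2) *\<^sub>R (b - st b))"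
    have "mul a b = mul a ?h + sc \<i> (mul a ?k)"
      by (subst decomp(1)) (simp add: mul_simps)
    also have "\<dots> = mul ?h a + sc \<i> (mul ?k a)"
    proof -
      have "mul ?h a = mul a ?h" using H decomp(2) by blast
      moreover have "mul ?k a = mul a ?k" using H decomp(3) by blast
      ultimately show ?thesis by simp
    qed
    also have "\<dots> = mul b a"
      by (subst (3) decomp(1)) (simp add: mul_simps)
    finally show "mul a b = mul b a" .
  qed
qed

lemma central_iff_C: "central a \<longleftrightarrow> a \<in> range (\<lambda>c. sc c e)"
proof
  assume c: "central a"
  let ?h = "(1/2) *\<^sub>R (a + st a)" and ?k = "sc (- \<i>) ((1/2) *\<^sub>R (a - st a))"
  have ch: "central ?h" using c central_st by (intro central_scaleR central_add)
  have ck: "central ?k" using c central_st by (intro central_sc central_scaleR central_diff)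
  obtain r where r: "?h = r *\<^sub>R e" using core[OF ch decomp(2)] by blast
  obtain s where s: "?k = s *\<^sub>R e" using core[OF ck decomp(3)] by blast
  have "a = r *\<^sub>R e + sc \<i> (s *\<^sub>R e)" using decomp(1)[of a] r s by simp
  also have "\<dots> = sc (complex_of_real r + \<i> * complex_of_real s) e"
    by (simp add: sc_real[symmetric] sc_addl sc_mult)
  finally show "a \<in> range (\<lambda>c. sc c e)" by blast
next
  assume "a \<in> range (\<lambda>c. sc c e)"
  then obtain c where "a = sc c e" by blast
  thus "central a" by (simp add: central_def mul_simps)
qed

lemma C_iff: "(\<forall>b. st b = b \<longrightarrow> mul b a - mul a (st b) = 0) \<longleftrightarrow> a \<in> range (\<lambda>c. sc c e)"
  unfolding central_iff_C[symmetric] central_iff_sa by auto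

lemma R_iff: "(\<forall>b. mul a b - mul b (st a) = 0) \<longleftrightarrow> a \<in> range (\<lambda>r::real. r *\<^sub>R e)"
proof
  assume H: "\<forall>b. mul a b - mul b (st a) = 0"
  have sa: "st a = a" using H[rule_format, of e] by simp
  have "central a" unfolding central_def using H sa by simp
  thus "a \<in> range (\<lambda>r::real. r *\<^sub>R e)" using core[OF _ sa] by blast
next
  assume "a \<in> range (\<lambda>r::real. r *\<^sub>R e)"
  then obtain r where "a = r *\<^sub>R e" by blast
  thus "\<forall>b. mul a b - mul b (st a) = 0" by (simp add: mul_simps st_scaleR)
qed

end

lemma bij_image_eq:
  assumes "bij f" "\<And>a. a \<in> X \<longleftrightarrow> f a \<in> Y" shows "f ` X = Y"
proof
  show "f ` X \<subseteq> Y" using assms(2) by auto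
  show "Y \<subseteq> f ` X"
  proof
    fix y assume "y \<in> Y"
    obtain a where "y = f a" using surjD[OF bij_is_surj[OF assms(1)]] by metis
    thus "y \<in> f ` X" using \<open>y \<in> Y\<close> assms(2) by auto
  qed
qed

theorem lemma2p8:
  fixes scA :: "complex \<Rightarrow> 'a::banach \<Rightarrow> 'a" and mulA :: "'a \<Rightarrow> 'a \<Rightarrow> 'a"
    and stA :: "'a \<Rightarrow> 'a" and eA :: 'a and sxA :: "complex \<Rightarrow> 'x::real_normed_vector \<Rightarrow> 'x"
    and scB :: "complex \<Rightarrow> 'b::banach \<Rightarrow> 'b" and mulB :: "'b \<Rightarrow> 'b \<Rightarrow> 'b"
    and stB :: "'b \<Rightarrow> 'b" and eB :: 'b and sxB :: "complex \<Rightarrow> 'y::real_normed_vector \<Rightarrow> 'y"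
    and p :: 'a and \<Phi> :: "'a \<Rightarrow> 'b"
  assumes A: "alt_W_factor scA mulA stA sxA" and eA: "is_identity mulA eA"
    and B: "alt_W_factor scB mulB stB sxB" and eB: "is_identity mulB eB"
    and p: "is_projection mulA stA p" and p1: "p \<noteq> eA"
    and bij: "bij \<Phi>"
    and hom: "\<And>a b. \<Phi> (mulA a b - mulA b (stA a)) = mulB (\<Phi> a) (\<Phi> b) - mulB (\<Phi> b) (stB (\<Phi> a))"
  shows "\<Phi> ` range (\<lambda>r::real. r *\<^sub>R eA) = range (\<lambda>r::real. r *\<^sub>R eB) \<and>
         (\<forall>a. stA a = a \<longleftrightarrow> stB (\<Phi> a) = \<Phi> a) \<and>
         \<Phi> ` range (\<lambda>c. scA c eA) = range (\<lambda>c. scB c eB)"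
proof -
  interpret A: acs scA mulA stA eA
    using A eA by (unfold_locales) (auto simp: alt_W_factor_def)
  interpret B: acs scB mulB stB eB
    using B eB by (unfold_locales) (auto simp: alt_W_factor_def)
  have inj: "\<Phi> x = \<Phi> y \<longleftrightarrow> x = y" for x y using bij_is_inj[OF bij] by (simp add: inj_eq)
  have sj: "surj \<Phi>" using bij by (rule bij_is_surj)
  obtain a0 where a0: "\<Phi> a0 = 0" using surjD[OF sj, of 0] by metis
  have Phi0: "\<Phi> 0 = 0" using hom[of a0 0] a0 by simp
  have z: "\<Phi> x = 0 \<longleftrightarrow> x = 0" for x using inj[of x 0] Phi0 by simp
  have surj: "(\<forall>b'. P b') \<longleftrightarrow> (\<forall>b. P (\<Phi> b))" for P
    using surjD[OF sj] by metis
  have part1: "\<Phi> ` range (\<lambda>r::real. r *\<^sub>R eA) = range (\<lambda>r::real. r *\<^sub>R eB)"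
  proof (rule bij_image_eq[OF bij])
    fix a
    have "a \<in> range (\<lambda>r::real. r *\<^sub>R eA) \<longleftrightarrow> (\<forall>b. mulA a b - mulA b (stA a) = 0)"
      by (rule A.R_iff[symmetric])
    also have "\<dots> \<longleftrightarrow> (\<forall>b. mulB (\<Phi> a) (\<Phi> b) - mulB (\<Phi> b) (stB (\<Phi> a)) = 0)"
      by (simp only: hom[symmetric] z)
    also have "\<dots> \<longleftrightarrow> (\<forall>b'. mulB (\<Phi> a) b' - mulB b' (stB (\<Phi> a)) = 0)"
      by (rule surj[symmetric])
    also have "\<dots> \<longleftrightarrow> \<Phi> a \<in> range (\<lambda>r::real. r *\<^sub>R eB)" by (rule B.R_iff)
    finally show "a \<in> range (\<lambda>r::real. r *\<^sub>R eA) \<longleftrightarrow> \<Phi> a \<in> range (\<lambda>r::real. r *\<^sub>R eB)" .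
  qed
  have "eB \<in> range (\<lambda>r::real. r *\<^sub>R eB)" by (rule range_eqI[of _ _ 1]) simp
  hence "eB \<in> \<Phi> ` range (\<lambda>r::real. r *\<^sub>R eA)" using part1 by simp
  then obtain t :: real where t: "\<Phi> (t *\<^sub>R eA) = eB" by blast
  have tnz: "t \<noteq> 0"
  proof
    assume "t = 0"
    hence "eB = 0" using t Phi0 by simp
    hence "\<Phi> p = 0" using B.e_left[of "\<Phi> p"] by simp
    thus False using z p unfolding is_projection_def by simp
  qed
  have part2: "\<forall>a. stA a = a \<longleftrightarrow> stB (\<Phi> a) = \<Phi> a"
  proof
    fix a
    have "stB (\<Phi> a) = \<Phi> a \<longleftrightarrow> mulB (\<Phi> a) eB - mulB eB (stB (\<Phi> a)) = 0" by auto
    also have "\<dots> \<longleftrightarrow> \<Phi> (mulA a (t *\<^sub>R eA) - mulA (t *\<^sub>R eA) (stA a)) = 0"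
      using hom[of a "t *\<^sub>R eA"] t by simp
    also have "\<dots> \<longleftrightarrow> t *\<^sub>R (a - stA a) = 0"
      using z by (simp add: A.mul_simps algebra_simps)
    also have "\<dots> \<longleftrightarrow> stA a = a" using tnz by auto
    finally show "stA a = a \<longleftrightarrow> stB (\<Phi> a) = \<Phi> a" by simp
  qed
  have part3: "\<Phi> ` range (\<lambda>c. scA c eA) = range (\<lambda>c. scB c eB)"
  proof (rule bij_image_eq[OF bij])
    fix a
    have "a \<in> range (\<lambda>c. scA c eA) \<longleftrightarrow> (\<forall>b. stA b = b \<longrightarrow> mulA b a - mulA a (stA b) = 0)"
      by (rule A.C_iff[symmetric])
    also have "\<dots> \<longleftrightarrow> (\<forall>b. stB (\<Phi> b) = \<Phi> b \<longrightarrow> mulB (\<Phi> b) (\<Phi> a) - mulB (\<Phi> a) (stB (\<Phi> b)) = 0)"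
      by (simp only: hom[symmetric] z part2[rule_format, symmetric])
    also have "\<dots> \<longleftrightarrow> (\<forall>b'. stB b' = b' \<longrightarrow> mulB b' (\<Phi> a) - mulB (\<Phi> a) (stB b') = 0)"
      by (rule surj[symmetric])
    also have "\<dots> \<longleftrightarrow> \<Phi> a \<in> range (\<lambda>c. scB c eB)" by (rule B.C_iff)
    finally show "a \<in> range (\<lambda>c. scA c eA) \<longleftrightarrow> \<Phi> a \<in> range (\<lambda>c. scB c eB)" .
  qed
  show ?thesis using part1 part2 part3 by blast
qed

end
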